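(* Let $(S(t),I(t))$ be a solution of the impulsive system $\dot S=S(A-S)-\beta_0 IS$, $\dot I=\beta_0 IS-(\sigma+g)I$ for $t\neq nT$, $S(nT)=(1-p)S(nT^-)$, $I(nT)=I(nT^-)$, with positive initial conditions in $$\mathcal{M}=\left\{(S,I)\in(\mathbb{R}_0^+)^2:\ 0\le S\le A,\ 0\le S+I\le\tfrac{A(\sigma+g+A)}{\sigma+g}\right\}.$$ If $\mathcal{R}_p<1$, then $\lim_{t\to+\infty}I(t)=0$.
   Context: Parameters: $A\in(0,1]$, $\beta_0>0$, $\sigma,g\ge0$ with $\sigma+g>0$, $p\in[0,1)$, $T>0$; it is assumed $S(t)\le A$. $\mathcal{R}_p=\frac{\beta_0}{\sigma+g}\frac1T\int_0^T\mathcal{S}(t)\,dt$, where $\mathcal{S}(t)=\frac{A[e^{AT}(1-p)-1]}{e^{AT}(1-p)-1+pe^{A(T-t)}}$ for $0\le t<T$; equivalently $\mathcal{R}_p=\frac{A\beta_0}{\sigma+g}\left[\frac{\ln(1-p)}{AT}+1\right]$. *)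

theory Defs
  imports "HOL-Analysis.Analysis"
begin

text \<open>Periodic solution of the susceptible subsystem (valid on [0,T)).\<close>
definition Sper :: "real \<Rightarrow> real \<Rightarrow> real \<Rightarrow> real \<Rightarrow> real" where
  "Sper A p T t = A * (exp (A*T) * (1 - p) - 1) / (exp (A*T) * (1 - p) - 1 + p * exp (A*(T - t)))"

definition Rp :: "real \<Rightarrow> real \<Rightarrow> real \<Rightarrow> real \<Rightarrow> real \<Rightarrow> real \<Rightarrow> real" where
  "Rp A \<beta>0 \<sigma> g p T = \<beta>0 / (\<sigma> + g) * (1 / T) * integral {0..T} (Sper A p T)"

definition regionM :: "real \<Rightarrow> real \<Rightarrow> real \<Rightarrow> (real \<times> real) set" where
  "regionM A \<sigma> g = {(s, i). 0 \<le> s \<and> 0 \<le> i \<and> s \<le> A \<and> s + i \<le> A * (\<sigma> + g + A) / (\<sigma> + g)}"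

definition impulsive_solution ::
  "real \<Rightarrow> real \<Rightarrow> real \<Rightarrow> real \<Rightarrow> real \<Rightarrow> real \<Rightarrow> (real \<Rightarrow> real) \<Rightarrow> (real \<Rightarrow> real) \<Rightarrow> bool" where
  "impulsive_solution A \<beta>0 \<sigma> g p T S I \<longleftrightarrow>
     (\<forall>t>0. (\<forall>n::nat. t \<noteq> real n * T) \<longrightarrow>
        (S has_real_derivative (S t * (A - S t) - \<beta>0 * I t * S t)) (at t) \<and>
        (I has_real_derivative (\<beta>0 * I t * S t - (\<sigma> + g) * I t)) (at t)) \<and>
     (\<forall>n::nat. continuous (at_right (real n * T)) S) \<and>
     continuous (at_right 0) I \<and>
     (\<forall>n::nat. n \<ge> 1 \<longrightarrow>
        (\<exists>L. (S \<longlongrightarrow> L) (at_left (real n * T)) \<and> S (real n * T) = (1 - p) * L) \<and>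
        isCont I (real n * T))"

end

theory Submission
  imports Defs
begin

lemma pos_lin:
  fixes y c :: "real \<Rightarrow> real"
  assumes "a \<le> t" "continuous_on {a..t} y" "continuous_on {a..t} c"
    "\<And>x. a < x \<Longrightarrow> x < t \<Longrightarrow> (y has_real_derivative c x * y x) (at x)" "y a > 0"
  shows "y t > 0"
proof (cases "a = t")
  case True then show ?thesis using assms by simp
next
  case False
  hence at: "a < t" using assms by simp
  define G where "G x = integral {a..x} c" for x
  have dG: "(G has_real_derivative c x) (at x within {a..t})" if "x \<in> {a..t}" for x
    unfolding G_def using integral_has_real_derivative[OF assms(3) that] .
  have cG: "continuous_on {a..t} G"
    using dG by (meson DERIV_continuous continuous_on_eq_continuous_within)
  define phi where "phi x = y x * exp (- G x)" for x
  have cphi: "continuous_on {a..t} phi" unfolding phi_def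
    by (intro continuous_intros assms cG)
  have "phi t = phi a"
  proof (rule DERIV_isconst_end[OF at cphi])
    fix x assume x: "a < x" "x < t"
    have "(G has_real_derivative c x) (at x)"
      using dG[of x] x at_within_Icc_at[of a x t] by simp
    moreover have "(y has_real_derivative c x * y x) (at x)" using assms(4) x by simp
    ultimately have "(phi has_real_derivative (c x * y x) * exp (- G x) + y x * (exp (- G x) * (- c x))) (at x)"
      unfolding phi_def by (auto intro!: derivative_eq_intros)
    then show "(phi has_real_derivative 0) (at x)" by (simp add: algebra_simps)
  qed
  moreover have "G a = 0" unfolding G_def by simp
  ultimately have "y t * exp (- G t) = y a" unfolding phi_def by simp
  then show ?thesis using assms(5) by (smt (verit) exp_gt_zero mult_nonpos_nonneg)
qed

lemma cont_Icc:
  fixes f :: "real \<Rightarrow> real"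
  assumes "continuous (at_right a) f" "\<And>x. a<x \<Longrightarrow> x<b \<Longrightarrow> isCont f x" "a<b \<Longrightarrow> isCont f b"
  shows "continuous_on {a..b} f"
proof (cases "a < b")
  case True
  show ?thesis
  proof (rule continuous_on_IccI[OF _ _ _ True])
    show "(f \<longlongrightarrow> f a) (at_right a)" using assms(1) by (simp add: continuous_within)
    show "(f \<longlongrightarrow> f b) (at_left b)" using assms(3)[OF True]
      by (simp add: isCont_def filterlim_at_split)
    show "f \<midarrow>x\<rightarrow> f x" if "a < x" "x < b" for x using assms(2)[OF that] by (simp add: isCont_def)
  qed
next
  case False
  then have "{a..b} = {} \<or> {a..b} = {a}" by auto
  then show ?thesis by auto
qed

lemma nomult:
  assumes "real n * T < x" "x < real (Suc n) * T" "(0::real) < T"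
  shows "x \<noteq> real k * T"
proof
  assume "x = real k * T"
  then have "real n < real k" "real k < real (Suc n)" using assms by auto
  then have "n < k" "k < Suc n" by (simp_all only: of_nat_less_iff)
  then show False by simp
qed

lemma interval_exists:
  assumes "(0::real) \<le> t" "0 < T"
  shows "\<exists>n. real n * T \<le> t \<and> t < real (Suc n) * T"
proof -
  define n where "n = nat \<lfloor>t / T\<rfloor>"
  have "real n = of_int \<lfloor>t / T\<rfloor>" unfolding n_def using assms by simp
  then have "real n \<le> t / T" "t / T < real n + 1" by linarith+
  then have "real n * T \<le> t" "t < (real n + 1) * T" using assms by (simp_all add: field_simps)
  then show ?thesis by (intro exI[of _ n]) (simp add: algebra_simps)
qed

lemma Nalg: "(E::real) > 0 \<Longrightarrow> A > 0 \<Longrightarrow> p < 1 \<Longrightarrow> A * W + E - 1 = A * E * (1 - p) * (1 / (E * (1 - p)) * W + (1 - 1 / E) / (A * (1 - p)))"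
proof -
  assume h: "(E::real) > 0" "A > 0" "p < 1"
  have "A * E * (1 - p) * (1 / (E * (1 - p)) * W) = A * W" using h by simp
  moreover have "A * E * (1 - p) * ((1 - 1 / E) / (A * (1 - p))) = E - 1" using h by (simp add: field_simps)
  ultimately show ?thesis by (simp add: distrib_left)
qed

lemma explim: "(k::real) > 0 \<Longrightarrow> ((\<lambda>t. exp (K - k * t)) \<longlongrightarrow> 0) at_top"
proof -
  assume k: "k > 0"
  have "filterlim (\<lambda>t. (- K) + k * t) at_top at_top"
    by (rule filterlim_tendsto_add_at_top[OF tendsto_const filterlim_tendsto_pos_mult_at_top[OF tendsto_const k filterlim_ident]])
  then have "filterlim (\<lambda>t. K - k * t) at_bot at_top"
    by (simp add: filterlim_uminus_at_bot)
  then show ?thesis by (rule filterlim_compose[OF exp_at_bot])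
qed

lemma Rp_integral:
  fixes A p T :: real
  assumes "0 < A" "0 \<le> p" "p < 1" "0 < T"
  shows "integral {0..T} (Sper A p T) = A * T + ln (1 - p)"
proof -
  define c where "c = exp (A*T) * (1 - p)"
  define F where "F t = ln ((c - 1) * exp (A*t) + p * exp (A*T))" for t
  have eAT: "exp (A*T) > 1" using assms by simp
  have pos: "(c - 1) * exp (A*t) + p * exp (A*T) > 0" if "t \<in> {0..T}" for t
  proof (cases "c - 1 \<ge> 0")
    case True
    show ?thesis
    proof (cases "p = 0")
      case True then show ?thesis using eAT unfolding c_def by simp
    next
      case False then show ?thesis using True assms
        by (smt (verit, best) exp_gt_zero mult_nonneg_nonneg mult_pos_pos)
    qed
  next
    case False
    have "exp (A*t) \<le> exp (A*T)" using that assms by simp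
    then have "(c - 1) * exp (A*t) \<ge> (c - 1) * exp (A*T)" using False
      by (simp add: mult_left_mono_neg)
    moreover have "(c - 1) * exp (A*T) + p * exp (A*T) = exp (A*T) * ((1-p) * (exp (A*T) - 1))"
      unfolding c_def by (simp add: algebra_simps)
    moreover have "exp (A*T) * ((1-p) * (exp (A*T) - 1)) > 0" using eAT assms by simp
    ultimately show ?thesis by linarith
  qed
  have "(Sper A p T has_integral (F T - F 0)) {0..T}"
  proof (rule fundamental_theorem_of_calculus)
    show "0 \<le> T" using assms by simp
    fix x assume x: "x \<in> {0..T}"
    have "(F has_real_derivative ((c - 1) * (exp (A*x) * A)) / ((c - 1) * exp (A*x) + p * exp (A*T))) (at x within {0..T})"
      unfolding F_def using pos[OF x] by (auto intro!: derivative_eq_intros)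
    moreover have "((c - 1) * (exp (A*x) * A)) / ((c - 1) * exp (A*x) + p * exp (A*T)) = Sper A p T x"
    proof -
      have e: "exp (A*(T - x)) = exp (A*T) / exp (A*x)" by (simp add: right_diff_distrib exp_diff)
      have D: "c - 1 + p * exp (A*(T-x)) = ((c - 1) * exp (A*x) + p * exp (A*T)) / exp (A*x)"
        unfolding e by (simp add: field_simps)
      have "Sper A p T x = A * (c - 1) / (((c - 1) * exp (A*x) + p * exp (A*T)) / exp (A*x))"
        unfolding Sper_def c_def[symmetric] D by simp
      also have "\<dots> = ((c - 1) * (exp (A*x) * A)) / ((c - 1) * exp (A*x) + p * exp (A*T))"
        by (simp add: divide_divide_eq_right algebra_simps)
      finally show ?thesis by simp
    qed
    ultimately show "(F has_vector_derivative Sper A p T x) (at x within {0..T})"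
      by (simp add: has_real_derivative_iff_has_vector_derivative)
  qed
  then have "integral {0..T} (Sper A p T) = F T - F 0" by (rule integral_unique)
  also have "F T = ln (exp (A*T) * ((1-p) * (exp (A*T) - 1)))"
    unfolding F_def c_def by (simp add: algebra_simps)
  also have "F 0 = ln (exp (A*T) - 1)" unfolding F_def c_def by (simp add: algebra_simps)
  also have "ln (exp (A*T) * ((1-p) * (exp (A*T) - 1))) = A*T + ln (1-p) + ln (exp (A*T) - 1)"
    using eAT assms by (simp add: ln_mult)
  finally show ?thesis by simp
qed

primrec wseq :: "real \<Rightarrow> real \<Rightarrow> real \<Rightarrow> nat \<Rightarrow> real" where
  "wseq w0 a b 0 = w0"
| "wseq w0 a b (Suc n) = a * wseq w0 a b n + b"

theorem lemma10:
  fixes A \<beta>0 \<sigma> g p T :: real and S I :: "real \<Rightarrow> real"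
  assumes "0 < A" "A \<le> 1" "0 < \<beta>0" "0 \<le> \<sigma>" "0 \<le> g" "0 < \<sigma> + g"
    and "0 \<le> p" "p < 1" "0 < T"
    and "impulsive_solution A \<beta>0 \<sigma> g p T S I"
    and "S 0 > 0" "I 0 > 0" "(S 0, I 0) \<in> regionM A \<sigma> g"
    and "\<forall>t\<ge>0. S t \<le> A"
    and "Rp A \<beta>0 \<sigma> g p T < 1"
  shows "(I \<longlongrightarrow> 0) at_top"
proof -
  note sol = assms(10)[unfolded impulsive_solution_def]
  have A0: "0 < A" and b0: "0 < \<beta>0" and sg: "0 < \<sigma> + g" and p0: "0 \<le> p" and p1: "p < 1"
    and T0: "0 < T" using assms by auto
  have SleA: "\<And>t. t \<ge> 0 \<Longrightarrow> S t \<le> A" using assms(14) by auto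
  have dS: "(S has_real_derivative (S x * (A - S x) - \<beta>0 * I x * S x)) (at x)"
    and dI: "(I has_real_derivative (\<beta>0 * I x * S x - (\<sigma> + g) * I x)) (at x)"
    if "real n * T < x" "x < real (Suc n) * T" for n x
  proof -
    have "x > 0" using that T0 by (smt (verit) mult_nonneg_nonneg of_nat_0_le_iff)
    moreover have "\<forall>k::nat. x \<noteq> real k * T" using nomult[OF that T0] by blast
    ultimately show "(S has_real_derivative (S x * (A - S x) - \<beta>0 * I x * S x)) (at x)"
      "(I has_real_derivative (\<beta>0 * I x * S x - (\<sigma> + g) * I x)) (at x)" using sol by auto
  qed
  have icS: "isCont S x" and icI: "isCont I x" if "real n * T < x" "x < real (Suc n) * T" for n x
    using dS[OF that] dI[OF that] by (auto intro: DERIV_isCont)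
  have rcS: "continuous (at_right (real n * T)) S" for n using sol by blast
  have icIn: "isCont I (real n * T)" if "n \<ge> 1" for n using sol that by blast
  have rcI: "continuous (at_right (real n * T)) I" for n
  proof (cases "n = 0")
    case True then show ?thesis using sol by simp
  next
    case False then show ?thesis using icIn[of n] by (simp add: continuous_at_imp_continuous_at_within)
  qed
  have jump: "\<exists>L. (S \<longlongrightarrow> L) (at_left (real (Suc n) * T)) \<and> S (real (Suc n) * T) = (1 - p) * L" for n
    using sol by (metis le_add1 plus_1_eq_Suc)
  have nT_lt: "real n * T < real (Suc n) * T" for n using T0 by simp
  have contS: "continuous_on {real n * T..t} S" and contI: "continuous_on {real n * T..t} I"
    if "real n * T \<le> t" "t < real (Suc n) * T" for n t
    using that by (auto intro!: cont_Icc rcS rcI icS icI)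
  have contIc: "continuous_on {real n * T..real (Suc n) * T} I" for n
  proof -
    have "isCont I (real (Suc n) * T)" using icIn[of "Suc n"] by simp
    then show ?thesis
      by (intro cont_Icc[OF rcI]) (auto intro: icI[of n])
  qed
  have Sstep: "(\<forall>t. real n * T \<le> t \<and> t < real (Suc n) * T \<longrightarrow> S t > 0) \<and> S (real (Suc n) * T) > 0"
    if Sn: "S (real n * T) > 0" for n
  proof -
    have Sho: "S t > 0" if t: "real n * T \<le> t" "t < real (Suc n) * T" for t
    proof (rule pos_lin[where c = "\<lambda>x. A - S x - \<beta>0 * I x", OF t(1) contS[OF t] _ _ Sn])
      show "continuous_on {real n * T..t} (\<lambda>x. A - S x - \<beta>0 * I x)"
        by (intro continuous_intros contS contI t)
      fix x assume x: "real n * T < x" "x < t"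
      have "(S has_real_derivative (S x * (A - S x) - \<beta>0 * I x * S x)) (at x)"
        using dS[of n x] x t by simp
      moreover have "S x * (A - S x) - \<beta>0 * I x * S x = (A - S x - \<beta>0 * I x) * S x"
        by (simp add: algebra_simps)
      ultimately show "(S has_real_derivative (A - S x - \<beta>0 * I x) * S x) (at x)" by simp
    qed
    obtain K0 where K0: "\<forall>x\<in>{real n * T..real (Suc n) * T}. \<bar>I x\<bar> \<le> K0"
      using compact_imp_bounded[OF compact_continuous_image[OF contIc compact_Icc]]
      unfolding bounded_real by auto
    define K where "K = max K0 0"
    have K: "I x \<le> K" if "x \<in> {real n * T..real (Suc n) * T}" for x
      using K0 that unfolding K_def by fastforce
    have K0': "K \<ge> 0" unfolding K_def by simp
    define m where "m = S (real n * T) * exp (- (\<beta>0 * K * T))"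
    have m0: "m > 0" unfolding m_def using Sn by simp
    have lb: "S t \<ge> m" if t: "real n * T \<le> t" "t < real (Suc n) * T" for t
    proof -
      have "S (real n * T) * exp (\<beta>0 * K * (real n * T)) \<le> S t * exp (\<beta>0 * K * t)"
      proof (rule DERIV_nonneg_imp_increasing_open[OF t(1)])
        show "continuous_on {real n * T..t} (\<lambda>x. S x * exp (\<beta>0 * K * x))"
          by (intro continuous_intros contS t)
        fix x assume x: "real n * T < x" "x < t"
        have d: "(S has_real_derivative (S x * (A - S x) - \<beta>0 * I x * S x)) (at x)"
          using dS[of n x] x t by simp
        have e: "((\<lambda>x. exp (\<beta>0 * K * x)) has_real_derivative exp (\<beta>0 * K * x) * (\<beta>0 * K)) (at x)"
          by (auto intro!: derivative_eq_intros)
        have "((\<lambda>x. S x * exp (\<beta>0 * K * x)) has_real_derivative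
            (S x * (A - S x) - \<beta>0 * I x * S x) * exp (\<beta>0 * K * x) + exp (\<beta>0 * K * x) * (\<beta>0 * K) * S x) (at x)"
          by (rule DERIV_mult[OF d e])
        moreover have "(S x * (A - S x) - \<beta>0 * I x * S x) * exp (\<beta>0 * K * x) + exp (\<beta>0 * K * x) * (\<beta>0 * K) * S x
             = (S x * exp (\<beta>0 * K * x)) * ((A - S x) + \<beta>0 * (K - I x))"
          by (simp add: algebra_simps)
        moreover have "(S x * exp (\<beta>0 * K * x)) * ((A - S x) + \<beta>0 * (K - I x)) \<ge> 0"
        proof -
          have "S x > 0" using Sho[of x] x t by simp
          moreover have "S x \<le> A" using SleA[of x] x T0
            by (smt (verit) mult_nonneg_nonneg of_nat_0_le_iff)
          moreover have "I x \<le> K" using K[of x] x t by simp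
          ultimately show ?thesis using b0 by simp
        qed
        ultimately show "\<exists>y. ((\<lambda>x. S x * exp (\<beta>0 * K * x)) has_real_derivative y) (at x) \<and> 0 \<le> y"
          by auto
      qed
      then have "S t \<ge> S (real n * T) * exp (\<beta>0 * K * (real n * T)) / exp (\<beta>0 * K * t)"
        by (simp add: field_simps)
      also have "S (real n * T) * exp (\<beta>0 * K * (real n * T)) / exp (\<beta>0 * K * t)
          = S (real n * T) * exp (\<beta>0 * K * (real n * T - t))"
        by (simp add: right_diff_distrib exp_diff)
      also have "\<dots> \<ge> m" unfolding m_def
      proof -
        have "real n * T - t \<ge> - T" using t by (simp add: algebra_simps)
        moreover have "\<beta>0 * K \<ge> 0" using b0 K0' by simp
        ultimately have "\<beta>0 * K * (real n * T - t) \<ge> \<beta>0 * K * (- T)"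
          by (rule mult_left_mono)
        then have "\<beta>0 * K * (real n * T - t) \<ge> - (\<beta>0 * K * T)" by simp
        then show "S (real n * T) * exp (- (\<beta>0 * K * T)) \<le> S (real n * T) * exp (\<beta>0 * K * (real n * T - t))"
          using Sn by simp
      qed
      finally show ?thesis .
    qed
    obtain L where L: "(S \<longlongrightarrow> L) (at_left (real (Suc n) * T))" "S (real (Suc n) * T) = (1 - p) * L"
      using jump[of n] by blast
    have "m \<le> L"
    proof (rule tendsto_lowerbound[OF L(1)])
      show "\<forall>\<^sub>F x in at_left (real (Suc n) * T). m \<le> S x"
        using eventually_at_left_real[OF nT_lt[of n]] by eventually_elim (auto intro: lb)
    qed simp
    then have "S (real (Suc n) * T) > 0" using L(2) m0 p1 by simp
    then show ?thesis using Sho by blast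
  qed
  have SposN: "S (real n * T) > 0" for n
  proof (induction n)
    case 0 then show ?case using assms(11) by simp
  next
    case (Suc n) then show ?case using Sstep by blast
  qed
  have Spos: "S t > 0" if "t \<ge> 0" for t
    using interval_exists[OF that T0] Sstep SposN by blast
  have Istep: "(\<forall>t. real n * T \<le> t \<and> t < real (Suc n) * T \<longrightarrow> I t > 0) \<and> I (real (Suc n) * T) > 0"
    if In: "I (real n * T) > 0" for n
  proof -
    have Iho: "I t > 0" if t: "real n * T \<le> t" "t < real (Suc n) * T" for t
    proof (rule pos_lin[where c = "\<lambda>x. \<beta>0 * S x - (\<sigma> + g)", OF t(1) contI[OF t] _ _ In])
      show "continuous_on {real n * T..t} (\<lambda>x. \<beta>0 * S x - (\<sigma> + g))"
        by (intro continuous_intros contS t)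
      fix x assume x: "real n * T < x" "x < t"
      have "(I has_real_derivative (\<beta>0 * I x * S x - (\<sigma> + g) * I x)) (at x)"
        using dI[of n x] x t by simp
      moreover have "\<beta>0 * I x * S x - (\<sigma> + g) * I x = (\<beta>0 * S x - (\<sigma> + g)) * I x"
        by (simp add: algebra_simps)
      ultimately show "(I has_real_derivative (\<beta>0 * S x - (\<sigma> + g)) * I x) (at x)" by simp
    qed
    have "I (real n * T) * exp ((\<sigma> + g) * (real n * T)) \<le> I (real (Suc n) * T) * exp ((\<sigma> + g) * (real (Suc n) * T))"
    proof (rule DERIV_nonneg_imp_increasing_open[OF less_imp_le[OF nT_lt]])
      show "continuous_on {real n * T..real (Suc n) * T} (\<lambda>x. I x * exp ((\<sigma> + g) * x))"
        by (intro continuous_intros contIc)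
      fix x assume x: "real n * T < x" "x < real (Suc n) * T"
      have d: "(I has_real_derivative (\<beta>0 * I x * S x - (\<sigma> + g) * I x)) (at x)"
        using dI[of n x] x by simp
      have e: "((\<lambda>x. exp ((\<sigma> + g) * x)) has_real_derivative exp ((\<sigma> + g) * x) * (\<sigma> + g)) (at x)"
        by (auto intro!: derivative_eq_intros)
      have "((\<lambda>x. I x * exp ((\<sigma> + g) * x)) has_real_derivative
          (\<beta>0 * I x * S x - (\<sigma> + g) * I x) * exp ((\<sigma> + g) * x) + exp ((\<sigma> + g) * x) * (\<sigma> + g) * I x) (at x)"
        by (rule DERIV_mult[OF d e])
      moreover have "(\<beta>0 * I x * S x - (\<sigma> + g) * I x) * exp ((\<sigma> + g) * x) + exp ((\<sigma> + g) * x) * (\<sigma> + g) * I x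
          = \<beta>0 * I x * S x * exp ((\<sigma> + g) * x)"
        by (simp add: algebra_simps)
      moreover have "\<beta>0 * I x * S x * exp ((\<sigma> + g) * x) \<ge> 0"
      proof -
        have "I x > 0" using Iho[of x] x by simp
        moreover have "S x > 0" using Spos[of x] x T0
          by (smt (verit) mult_nonneg_nonneg of_nat_0_le_iff)
        ultimately show ?thesis using b0 by simp
      qed
      ultimately show "\<exists>y. ((\<lambda>x. I x * exp ((\<sigma> + g) * x)) has_real_derivative y) (at x) \<and> 0 \<le> y"
        by auto
    qed
    moreover have "I (real n * T) * exp ((\<sigma> + g) * (real n * T)) > 0" using In by simp
    ultimately have "I (real (Suc n) * T) * exp ((\<sigma> + g) * (real (Suc n) * T)) > 0" by linarith
    then have "I (real (Suc n) * T) > 0" by (simp add: zero_less_mult_iff)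
    then show ?thesis using Iho by blast
  qed
  have IposN: "I (real n * T) > 0" for n
  proof (induction n)
    case 0 then show ?case using assms(12) by simp
  next
    case (Suc n) then show ?case using Istep by blast
  qed
  have Ipos: "I t > 0" if "t \<ge> 0" for t
    using interval_exists[OF that T0] Istep IposN by blast
  define Q where "Q \<rho> s = \<rho> / exp (A * s) + (1 - 1 / exp (A * s)) / A" for \<rho> s
  have Scomp: "S t * Q (1 / S (real n * T)) (t - real n * T) \<le> 1"
    if t: "real n * T \<le> t" "t < real (Suc n) * T" for n t
  proof -
    define G where "G x = exp (A * x) / S x - exp (A * x) / A" for x
    have Sx: "S x > 0" if "real n * T \<le> x" for x
      using Spos[of x] that T0 by (smt (verit) mult_nonneg_nonneg of_nat_0_le_iff)
    have "G (real n * T) \<le> G t"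
    proof (rule DERIV_nonneg_imp_increasing_open[OF t(1)])
      show "continuous_on {real n * T..t} G" unfolding G_def
        using Sx A0 by (intro continuous_intros contS t) (auto simp: less_imp_neq[symmetric])
      fix x assume x: "real n * T < x" "x < t"
      have d: "(S has_real_derivative (S x * (A - S x) - \<beta>0 * I x * S x)) (at x)"
        using dS[of n x] x t by simp
      have e: "((\<lambda>x. exp (A * x)) has_real_derivative exp (A * x) * A) (at x)"
        by (auto intro!: derivative_eq_intros)
      have S0x: "S x \<noteq> 0" using Sx[of x] x by simp
      have "(G has_real_derivative
          (exp (A * x) * A * S x - exp (A * x) * (S x * (A - S x) - \<beta>0 * I x * S x)) / (S x * S x)
          - exp (A * x) * A / A) (at x)"
        unfolding G_def by (intro DERIV_diff DERIV_divide e d S0x DERIV_cdivide)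
      moreover have "(exp (A * x) * A * S x - exp (A * x) * (S x * (A - S x) - \<beta>0 * I x * S x)) / (S x * S x)
          - exp (A * x) * A / A = exp (A * x) * \<beta>0 * I x / S x"
        using S0x A0 by (simp add: field_simps power2_eq_square)
      moreover have "exp (A * x) * \<beta>0 * I x / S x \<ge> 0"
        using Ipos[of x] Sx[of x] x T0 b0 by (smt (verit) divide_nonneg_pos exp_gt_zero mult_nonneg_nonneg
            mult_pos_pos of_nat_0_le_iff)
      ultimately show "\<exists>y. (G has_real_derivative y) (at x) \<and> 0 \<le> y" by auto
    qed
    define E where "E = exp (A * (t - real n * T))"
    have E0: "E > 0" unfolding E_def by simp
    have eq: "exp (A * t) = exp (A * (real n * T)) * E" unfolding E_def
      by (simp add: exp_add[symmetric] algebra_simps)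
    have "exp (A * (real n * T)) * (1 / S (real n * T) - 1 / A) \<le> exp (A * (real n * T)) * (E * (1 / S t - 1 / A))"
      using \<open>G (real n * T) \<le> G t\<close> unfolding G_def eq by (simp add: algebra_simps)
    then have "1 / S (real n * T) - 1 / A \<le> E * (1 / S t - 1 / A)" by simp
    then have h: "(1 / S (real n * T) - 1 / A) / E \<le> 1 / S t - 1 / A"
      using E0 by (simp add: pos_divide_le_eq mult.commute)
    have "Q (1 / S (real n * T)) (t - real n * T) = (1 / S (real n * T) - 1 / A) / E + 1 / A"
      unfolding Q_def E_def[symmetric] using E0 A0 by (simp add: field_simps)
    then have "Q (1 / S (real n * T)) (t - real n * T) \<le> 1 / S t" using h by linarith
    then show ?thesis using Sx[of t] t by (simp add: field_simps)
  qed
  have Tdiff: "real (Suc n) * T - real n * T = T" for n by (simp add: algebra_simps)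
  have rbound: "Q (1 / S (real n * T)) T / (1 - p) \<le> 1 / S (real (Suc n) * T)" for n
  proof -
    define r where "r = 1 / S (real n * T)"
    obtain L where L: "(S \<longlongrightarrow> L) (at_left (real (Suc n) * T))" "S (real (Suc n) * T) = (1 - p) * L"
      using jump[of n] by blast
    have "isCont (\<lambda>t. Q r (t - real n * T)) (real (Suc n) * T)"
      unfolding Q_def using A0 by (intro continuous_intros) auto
    then have "((\<lambda>t. Q r (t - real n * T)) \<longlongrightarrow> Q r (real (Suc n) * T - real n * T)) (at_left (real (Suc n) * T))"
      by (simp add: isCont_def filterlim_at_split)
    then have lim: "((\<lambda>t. S t * Q r (t - real n * T)) \<longlongrightarrow> L * Q r T) (at_left (real (Suc n) * T))"
      using tendsto_mult[OF L(1)] Tdiff[of n] by simp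
    have "L * Q r T \<le> 1"
    proof (rule tendsto_upperbound[OF lim])
      show "\<forall>\<^sub>F x in at_left (real (Suc n) * T). S x * Q r (x - real n * T) \<le> 1"
        using eventually_at_left_real[OF nT_lt[of n]] by eventually_elim (auto simp: r_def intro!: Scomp)
    qed simp
    then have h1: "(1 - p) * (L * Q r T) \<le> (1 - p) * 1" using p1 by (intro mult_left_mono) auto
    have h2: "S (real (Suc n) * T) * Q r T = (1 - p) * (L * Q r T)" using L(2) by simp
    have "S (real (Suc n) * T) * Q r T \<le> 1 - p" unfolding h2 using h1 by simp
    moreover have "S (real (Suc n) * T) > 0" using SposN by blast
    ultimately show ?thesis unfolding r_def[symmetric] using p1
      by (simp add: field_simps)
  qed
  define a where "a = 1 / (exp (A * T) * (1 - p))"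
  define b where "b = (1 - 1 / exp (A * T)) / (A * (1 - p))"
  have eAT: "exp (A * T) > 1" using A0 T0 by simp
  have a0: "a > 0" unfolding a_def using p1 by simp
  have bpos: "b > 0" unfolding b_def using eAT p1 A0 by simp
  have Qab: "Q \<rho> T / (1 - p) = a * \<rho> + b" for \<rho>
    unfolding Q_def a_def b_def using p1 A0 by (simp add: add_divide_distrib divide_divide_eq_left)
  define w where "w = wseq (1 / S 0) a b"
  have wpos: "w n > 0" for n
    by (induction n) (auto simp: w_def assms(11) a0 bpos add_pos_pos)
  have rw: "w n \<le> 1 / S (real n * T)" for n
  proof (induction n)
    case 0 then show ?case by (simp add: w_def)
  next
    case (Suc n)
    have "w (Suc n) = a * w n + b" by (simp add: w_def)
    also have "\<dots> \<le> a * (1 / S (real n * T)) + b" using mult_left_mono[OF Suc less_imp_le[OF a0]] by linarith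
    also have "\<dots> \<le> 1 / S (real (Suc n) * T)" using rbound[of n] Qab by simp
    finally show ?case .
  qed
  define \<Phi> where "\<Phi> = A * T + ln (1 - p)"
  have lnstep: "ln (I (real (Suc n) * T)) - \<beta>0 * ln (w (Suc n))
      \<le> ln (I (real n * T)) - \<beta>0 * ln (w n) + (\<beta>0 * \<Phi> - (\<sigma> + g) * T)" for n
  proof -
    define c where "c = real n * T"
    define W where "W = w n"
    have W0: "W > 0" unfolding W_def using wpos by simp
    define N where "N x = A * W + exp (A * (x - c)) - 1" for x
    have Npos: "N x > 0" if "c \<le> x" for x
    proof -
      have "exp (A * (x - c)) \<ge> 1" using that A0 by simp
      then show ?thesis unfolding N_def using A0 W0 by (smt (verit) mult_pos_pos)
    qed
    have c0: "c \<ge> 0" unfolding c_def using T0 by simp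
    define \<psi> where "\<psi> x = ln (I x) - \<beta>0 * ln (N x) + (\<sigma> + g) * x" for x
    have "\<psi> (real (Suc n) * T) \<le> \<psi> c"
    proof (rule DERIV_nonpos_imp_decreasing_open[OF less_imp_le[OF nT_lt[of n]], unfolded c_def[symmetric]])
      show "continuous_on {c..real (Suc n) * T} \<psi>" unfolding \<psi>_def N_def
        using contIc[of n] Ipos c0 Npos[unfolded N_def] unfolding c_def[symmetric]
        by (intro continuous_intros) (auto simp: less_imp_neq[symmetric] intro!: Ipos)
      fix x assume x: "c < x" "x < real (Suc n) * T"
      have xin: "real n * T < x" "x < real (Suc n) * T" using x unfolding c_def by auto
      have Ix: "I x > 0" using Ipos[of x] x c0 by simp
      have Sx: "S x > 0" using Spos[of x] x c0 by simp
      have d1: "((\<lambda>x. ln (I x)) has_real_derivative 1 / I x * (\<beta>0 * I x * S x - (\<sigma> + g) * I x)) (at x)"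
        by (rule DERIV_chain2[OF DERIV_ln_divide[OF Ix] dI[OF xin]])
      have dN: "(N has_real_derivative exp (A * (x - c)) * A) (at x)"
        unfolding N_def by (auto intro!: derivative_eq_intros)
      have d2: "((\<lambda>x. ln (N x)) has_real_derivative 1 / N x * (exp (A * (x - c)) * A)) (at x)"
        by (rule DERIV_chain2[OF DERIV_ln_divide[OF Npos] dN]) (use x in simp)
      have d3: "((\<lambda>x. (\<sigma> + g) * x) has_real_derivative (\<sigma> + g)) (at x)"
        by (auto intro!: derivative_eq_intros)
      have d: "(\<psi> has_real_derivative 1 / I x * (\<beta>0 * I x * S x - (\<sigma> + g) * I x) - \<beta>0 * (1 / N x * (exp (A * (x - c)) * A)) + (\<sigma> + g)) (at x)"
        unfolding \<psi>_def by (intro DERIV_add DERIV_diff d1 d3 DERIV_cmult d2)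
      have val: "1 / I x * (\<beta>0 * I x * S x - (\<sigma> + g) * I x) - \<beta>0 * (1 / N x * (exp (A * (x - c)) * A)) + (\<sigma> + g)
          = \<beta>0 * (S x - exp (A * (x - c)) * A / N x)"
        using Ix by (simp add: field_simps)
      have "S x \<le> exp (A * (x - c)) * A / N x"
      proof -
        define e where "e = exp (A * (x - c))"
        have e0: "e > 0" unfolding e_def by simp
        have "S x * Q (1 / S c) (x - c) \<le> 1" using Scomp[of n x] xin unfolding c_def by simp
        moreover have "Q W (x - c) \<le> Q (1 / S c) (x - c)"
        proof -
          have "W / exp (A * (x - c)) \<le> (1 / S c) / exp (A * (x - c))"
            using rw[of n] unfolding W_def[symmetric] c_def[symmetric]
            by (intro divide_right_mono) auto
          then show ?thesis unfolding Q_def by linarith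
        qed
        ultimately have "S x * Q W (x - c) \<le> 1" using Sx
          by (smt (verit) mult_left_mono)
        moreover have "Q W (x - c) = N x / (A * e)" unfolding Q_def N_def e_def[symmetric]
          using e0 A0 by (simp add: field_simps)
        ultimately have "S x * (N x / (A * e)) \<le> 1" by simp
        then have "S x * N x \<le> A * e" using e0 A0 by (simp add: field_simps)
        then show ?thesis unfolding e_def[symmetric] using Npos[of x] x
          by (simp add: field_simps)
      qed
      then have "\<beta>0 * (S x - exp (A * (x - c)) * A / N x) \<le> 0" using b0
        by (simp add: mult_nonneg_nonpos)
      then show "\<exists>y. (\<psi> has_real_derivative y) (at x) \<and> y \<le> 0" using d val by auto
    qed
    then have psi: "ln (I (real (Suc n) * T)) - \<beta>0 * ln (N (real (Suc n) * T)) + (\<sigma> + g) * (real (Suc n) * T)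
        \<le> ln (I c) - \<beta>0 * ln (N c) + (\<sigma> + g) * c" unfolding \<psi>_def .
    have N1: "N (real (Suc n) * T) = A * exp (A * T) * (1 - p) * w (Suc n)"
    proof -
      have "w (Suc n) = a * W + b" unfolding W_def by (simp add: w_def)
      moreover have "exp (A * (real (Suc n) * T - c)) = exp (A * T)" unfolding c_def Tdiff ..
      ultimately show ?thesis unfolding N_def a_def b_def using Nalg[of "exp (A * T)" A p W] p1 A0
        by simp
    qed
    have lnN1: "ln (N (real (Suc n) * T)) = ln A + A * T + ln (1 - p) + ln (w (Suc n))"
      unfolding N1 using A0 p1 wpos[of "Suc n"] by (simp add: ln_mult)
    have lnN0: "ln (N c) = ln A + ln W" unfolding N_def using A0 W0 by (simp add: ln_mult)
    have e1: "\<beta>0 * ln (N (real (Suc n) * T)) = \<beta>0 * ln A + \<beta>0 * \<Phi> + \<beta>0 * ln (w (Suc n))"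
      unfolding lnN1 \<Phi>_def by (simp add: algebra_simps)
    have e0: "\<beta>0 * ln (N c) = \<beta>0 * ln A + \<beta>0 * ln W" unfolding lnN0 by (simp add: algebra_simps)
    have e2: "(\<sigma> + g) * (real (Suc n) * T) = (\<sigma> + g) * c + (\<sigma> + g) * T"
      unfolding c_def by (simp add: algebra_simps)
    show ?thesis using psi e1 e0 e2 unfolding W_def c_def by linarith
  qed
  have RpPhi: "\<beta>0 * \<Phi> < (\<sigma> + g) * T"
  proof -
    have "Rp A \<beta>0 \<sigma> g p T = (\<beta>0 * \<Phi>) / ((\<sigma> + g) * T)"
      unfolding Rp_def Rp_integral[OF A0 p0 p1 T0] \<Phi>_def by simp
    then show ?thesis using assms(15) sg T0 by (simp add: divide_less_eq)
  qed
  define M where "M = max \<Phi> 0"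
  have bM: "\<beta>0 * M < (\<sigma> + g) * T" unfolding M_def using RpPhi sg T0
    by (cases "\<Phi> \<le> 0") (auto simp: max_def)
  define \<delta> where "\<delta> = ((\<sigma> + g) * T - \<beta>0 * M) / 2"
  have d0: "\<delta> > 0" unfolding \<delta>_def using bM by simp
  define \<eta> where "\<eta> = \<delta> / \<beta>0"
  have eta0: "\<eta> > 0" unfolding \<eta>_def using d0 b0 by simp
  define m where "m = exp (max (- \<Phi>) 0 + \<eta>)"
  have m1: "m > 1" unfolding m_def using eta0 by simp
  have aexp: "a = exp (- \<Phi>)"
  proof -
    have "exp \<Phi> = exp (A * T) * (1 - p)" unfolding \<Phi>_def using p1 by (simp add: exp_add)
    then show ?thesis unfolding a_def exp_minus by (simp add: inverse_eq_divide)
  qed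
  have am: "a \<le> m" unfolding aexp m_def using eta0 by simp
  define B where "B = b / (m - 1)"
  have B0: "B > 0" unfolding B_def using bpos m1 by simp
  have bB: "b + B = m * B" unfolding B_def using m1 by (simp add: field_simps)
  have wbound: "w n + B \<le> m ^ n * (w 0 + B)" for n
  proof (induction n)
    case 0 then show ?case by simp
  next
    case (Suc n)
    have "w (Suc n) + B = a * w n + (b + B)" by (simp add: w_def)
    also have "\<dots> \<le> m * w n + m * B" unfolding bB
      using mult_right_mono[OF am less_imp_le[OF wpos[of n]]] by simp
    also have "\<dots> = m * (w n + B)" by (simp add: algebra_simps)
    also have "\<dots> \<le> m * (m ^ n * (w 0 + B))" using Suc m1 by simp
    finally show ?case by simp
  qed
  define W0 where "W0 = w 0 + B"
  have W00: "W0 > 0" unfolding W0_def using wpos[of 0] B0 by simp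
  have lnw: "ln (w n) \<le> real n * (max (- \<Phi>) 0 + \<eta>) + ln W0" for n
  proof -
    have "w n \<le> m ^ n * W0" using wbound[of n] B0 unfolding W0_def by simp
    then have "ln (w n) \<le> ln (m ^ n * W0)" using wpos[of n] by simp
    also have "\<dots> = real n * ln m + ln W0" using m1 W00 by (simp add: ln_mult ln_realpow)
    finally show ?thesis unfolding m_def by simp
  qed
  define D where "D = \<beta>0 * \<Phi> - (\<sigma> + g) * T"
  have Lind: "ln (I (real n * T)) - \<beta>0 * ln (w n) \<le> ln (I 0) - \<beta>0 * ln (w 0) + real n * D" for n
  proof (induction n)
    case 0 then show ?case by simp
  next
    case (Suc n)
    then show ?case using lnstep[of n] unfolding D_def by (simp add: algebra_simps)
  qed
  define C where "C = ln (I 0) - \<beta>0 * ln (w 0) + \<beta>0 * ln W0"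
  have lnIN: "ln (I (real n * T)) \<le> C - real n * \<delta>" for n
  proof -
    define K' where "K' = max (- \<Phi>) 0 + \<eta>"
    have h1: "\<beta>0 * ln (w n) \<le> \<beta>0 * (real n * K') + \<beta>0 * ln W0"
      using mult_left_mono[OF lnw[of n] less_imp_le[OF b0]] unfolding K'_def by (simp add: distrib_left)
    have h2: "D + \<beta>0 * K' = - \<delta>"
      unfolding K'_def D_def \<eta>_def \<delta>_def M_def using b0 by (auto simp: max_def field_simps)
    have h3: "real n * D + \<beta>0 * (real n * K') = real n * (D + \<beta>0 * K')" by (simp add: algebra_simps)
    have h4: "real n * (D + \<beta>0 * K') = - (real n * \<delta>)" unfolding h2 by simp
    show ?thesis using Lind[of n] h1 h3 h4 unfolding C_def by linarith
  qed
  have intra: "ln (I t) \<le> ln (I (real n * T)) + \<beta>0 * A * T"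
    if t: "real n * T \<le> t" "t < real (Suc n) * T" for n t
  proof -
    have c0: "real n * T \<ge> 0" using T0 by simp
    have "ln (I t) - \<beta>0 * A * t \<le> ln (I (real n * T)) - \<beta>0 * A * (real n * T)"
    proof (rule DERIV_nonpos_imp_decreasing_open[OF t(1)])
      show "continuous_on {real n * T..t} (\<lambda>x. ln (I x) - \<beta>0 * A * x)"
      proof -
        have "I x \<noteq> 0" if "x \<in> {real n * T..t}" for x
        proof -
          have "x \<ge> 0" using that c0 by auto
          then show ?thesis using Ipos[of x] by simp
        qed
        then show ?thesis using contI[OF t] by (intro continuous_intros) auto
      qed
      fix x assume x: "real n * T < x" "x < t"
      have xin: "real n * T < x" "x < real (Suc n) * T" using x t by auto
      have Ix: "I x > 0" using Ipos[of x] x c0 by simp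
      have Sx: "S x \<le> A" using SleA[of x] x c0 by simp
      have d1: "((\<lambda>x. ln (I x)) has_real_derivative 1 / I x * (\<beta>0 * I x * S x - (\<sigma> + g) * I x)) (at x)"
        by (rule DERIV_chain2[OF DERIV_ln_divide[OF Ix] dI[OF xin]])
      have d: "((\<lambda>x. ln (I x) - \<beta>0 * A * x) has_real_derivative
          1 / I x * (\<beta>0 * I x * S x - (\<sigma> + g) * I x) - \<beta>0 * A * 1) (at x)"
        by (intro DERIV_diff d1 DERIV_cmult DERIV_ident)
      have "1 / I x * (\<beta>0 * I x * S x - (\<sigma> + g) * I x) - \<beta>0 * A * 1 = \<beta>0 * (S x - A) - (\<sigma> + g)"
        using Ix by (simp add: field_simps)
      moreover have "\<beta>0 * (S x - A) \<le> 0" using Sx b0 by (simp add: mult_nonneg_nonpos)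
      ultimately show "\<exists>y. ((\<lambda>x. ln (I x) - \<beta>0 * A * x) has_real_derivative y) (at x) \<and> y \<le> 0"
        using d sg by (intro exI[of _ "1 / I x * (\<beta>0 * I x * S x - (\<sigma> + g) * I x) - \<beta>0 * A * 1"]) auto
    qed
    moreover have "\<beta>0 * A * t - \<beta>0 * A * (real n * T) \<le> \<beta>0 * A * T"
    proof -
      have "t - real n * T \<le> T" using t(2) by (simp add: algebra_simps)
      then have "\<beta>0 * A * (t - real n * T) \<le> \<beta>0 * A * T" using b0 A0 by simp
      then show ?thesis by (simp add: algebra_simps)
    qed
    ultimately show ?thesis by linarith
  qed
  define K where "K = C + \<beta>0 * A * T + \<delta>"
  have bound: "I t \<le> exp (K - \<delta> / T * t)" if t0: "t \<ge> 0" for t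
  proof -
    obtain n where n: "real n * T \<le> t" "t < real (Suc n) * T" using interval_exists[OF t0 T0] by blast
    have "ln (I t) \<le> C - real n * \<delta> + \<beta>0 * A * T" using intra[OF n] lnIN[of n] by linarith
    moreover have "\<delta> / T * t - \<delta> \<le> real n * \<delta>"
    proof -
      have "t / T < real n + 1" using n(2) T0 by (simp add: divide_less_eq algebra_simps)
      then have "\<delta> * (t / T) \<le> \<delta> * (real n + 1)" using d0 by (intro mult_left_mono) auto
      then show ?thesis by (simp add: algebra_simps)
    qed
    ultimately have "ln (I t) \<le> K - \<delta> / T * t" unfolding K_def by linarith
    then show ?thesis using Ipos[OF t0] by (metis exp_ln exp_le_cancel_iff)
  qed
  show ?thesis
  proof (rule tendsto_sandwich[where f = "\<lambda>_. 0" and h = "\<lambda>t. exp (K - \<delta> / T * t)"])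
    show "\<forall>\<^sub>F t in at_top. 0 \<le> I t"
      using eventually_ge_at_top[of 0] by eventually_elim (auto intro: less_imp_le Ipos)
    show "\<forall>\<^sub>F t in at_top. I t \<le> exp (K - \<delta> / T * t)"
      using eventually_ge_at_top[of 0] by eventually_elim (rule bound)
    show "((\<lambda>_. 0) \<longlongrightarrow> (0::real)) at_top" by simp
    show "((\<lambda>t. exp (K - \<delta> / T * t)) \<longlongrightarrow> 0) at_top" using d0 T0 by (intro explim) simp
  qed
qed

end
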